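(* Let $L\ge1$ and consider a continuous-time Markov chain on $\{0,\dots,L\}$ with jump rates $q(\cdot,\cdot)$, reversible with respect to a probability measure $p$. Assume that for some $\alpha,\beta>0$: (a) $\min_{n\in\{1,\dots,L\}}\max\big(q(n,n-1),q(n-1,n)\big)\ge\alpha$; (b) for every $n\in\{0,\dots,L\}$, $\min\big(\sum_{m\le n}p(m),\ \sum_{m\ge n}p(m)\big)\le\beta\,p(n)$. Then the relaxation time (inverse spectral gap) of the chain is at most $\beta L/\alpha$. *)

theory Defs
  imports Complex_Main
begin

definition rate_matrix :: "nat \<Rightarrow> (nat \<Rightarrow> nat \<Rightarrow> real) \<Rightarrow> bool" where
  "rate_matrix L q \<longleftrightarrow> (\<forall>n\<in>{0..L}. \<forall>m\<in>{0..L}. n \<noteq> m \<longrightarrow> q n m \<ge> 0)"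

definition prob_on :: "nat \<Rightarrow> (nat \<Rightarrow> real) \<Rightarrow> bool" where
  "prob_on L p \<longleftrightarrow> (\<forall>n\<in>{0..L}. p n > 0) \<and> (\<Sum>n=0..L. p n) = 1"

definition reversible :: "nat \<Rightarrow> (nat \<Rightarrow> real) \<Rightarrow> (nat \<Rightarrow> nat \<Rightarrow> real) \<Rightarrow> bool" where
  "reversible L p q \<longleftrightarrow> (\<forall>n\<in>{0..L}. \<forall>m\<in>{0..L}. p n * q n m = p m * q m n)"

definition dirichlet_form :: "nat \<Rightarrow> (nat \<Rightarrow> real) \<Rightarrow> (nat \<Rightarrow> nat \<Rightarrow> real) \<Rightarrow> (nat \<Rightarrow> real) \<Rightarrow> real" where
  "dirichlet_form L p q f =
     (1/2) * (\<Sum>n=0..L. \<Sum>m\<in>{0..L}-{n}. p n * q n m * (f n - f m)^2)"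

definition variance_p :: "nat \<Rightarrow> (nat \<Rightarrow> real) \<Rightarrow> (nat \<Rightarrow> real) \<Rightarrow> real" where
  "variance_p L p f = (\<Sum>n=0..L. p n * (f n)^2) - (\<Sum>n=0..L. p n * f n)^2"

definition spectral_gap :: "nat \<Rightarrow> (nat \<Rightarrow> real) \<Rightarrow> (nat \<Rightarrow> nat \<Rightarrow> real) \<Rightarrow> real" where
  "spectral_gap L p q =
     Inf {dirichlet_form L p q f / variance_p L p f | f. variance_p L p f \<noteq> 0}"

definition relaxation_time :: "nat \<Rightarrow> (nat \<Rightarrow> real) \<Rightarrow> (nat \<Rightarrow> nat \<Rightarrow> real) \<Rightarrow> real" where
  "relaxation_time L p q = 1 / spectral_gap L p q"

end

theory Submission imports Defs "HOL-Analysis.Analysis" begin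

lemma var_le:
  assumes "(\<Sum>n=0..L. p n) = 1"
  shows "variance_p L p f \<le> (\<Sum>n=0..L. p n * (f n - c)^2)"
proof -
  have e: "(\<Sum>n=0..L. p n * (f n - c)^2) = (\<Sum>n=0..L. p n * f n ^2) - 2*c*(\<Sum>n=0..L. p n * f n) + c^2 * (\<Sum>n=0..L. p n)"
    by (simp add: power2_diff algebra_simps sum.distrib sum_subtractf sum_distrib_left) (simp add: sum_distrib_right)
  let ?B = "(\<Sum>n=0..L. p n * f n)"
  have "(?B - c)^2 = ?B^2 - 2*c*?B + c^2" by (simp add: power2_eq_square algebra_simps)
  moreover have "0 \<le> (?B - c)^2" by simp
  ultimately show ?thesis unfolding variance_p_def e assms by simp
qed

lemma var_nonneg:
  assumes "(\<Sum>n=0..L. p n) = 1" "\<forall>n\<in>{0..L}. p n > 0"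
  shows "variance_p L p f \<ge> 0"
proof -
  have "variance_p L p f = (\<Sum>n=0..L. p n * (f n - (\<Sum>n=0..L. p n * f n))^2)"
  proof -
    let ?c = "(\<Sum>n=0..L. p n * f n)"
    have e: "(\<Sum>n=0..L. p n * (f n - ?c)^2) = (\<Sum>n=0..L. p n * f n ^2) - 2*?c*?c + ?c^2 * (\<Sum>n=0..L. p n)"
      by (simp add: power2_diff algebra_simps sum.distrib sum_subtractf sum_distrib_left) (simp add: sum_distrib_right)
    show ?thesis unfolding variance_p_def e assms by (simp add: power2_eq_square sum_distrib_right[symmetric] assms)
  qed
  also have "\<dots> \<ge> 0" using assms(2) by (intro sum_nonneg mult_nonneg_nonneg) (auto simp: less_imp_le)
  finally show ?thesis .
qed

lemma path_bound:
  fixes p f :: "nat \<Rightarrow> real"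
  assumes "k \<le> L" "\<forall>n\<in>{0..L}. p n \<ge> 0"
  shows "(\<Sum>n=0..L. p n * (f n - f k)^2) \<le> real L * (\<Sum>e<L. (if e < k then (\<Sum>m<Suc e. p m) else (\<Sum>m=0..L. p m) - (\<Sum>m<Suc e. p m)) * (f (Suc e) - f e)^2)"
proof -
  define E where "E n = {e. e < L \<and> (n \<le> e \<and> e < k \<or> k \<le> e \<and> e < n)}" for n
  define D where "D e = (f (Suc e) - f e)^2" for e
  have Esub: "E n \<subseteq> {..<L}" for n unfolding E_def by auto
  have step: "(f n - f k)^2 \<le> real L * (\<Sum>e\<in>E n. D e)" if n: "n \<le> L" for n
  proof -
    have "(f n - f k)^2 = (\<Sum>e\<in>E n. f (Suc e) - f e)^2"
    proof (cases "n < k")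
      case True
      then have "E n = {n..<k}" unfolding E_def using assms(1) by auto
      then show ?thesis using sum_Suc_diff'[of n k f] True by (simp add: power2_commute)
    next
      case False
      then have "E n = {k..<n}" unfolding E_def using n by auto
      then show ?thesis using sum_Suc_diff'[of k n f] False by simp
    qed
    also have "\<dots> \<le> (\<Sum>e\<in>E n. D e) * card (E n)"
      unfolding D_def by (rule sum_squared_le_sum_of_squares)
    also have "\<dots> \<le> (\<Sum>e\<in>E n. D e) * real L"
    proof (rule mult_left_mono)
      have "card (E n) \<le> card {..<L}" by (rule card_mono) (auto simp: Esub)
      then show "real (card (E n)) \<le> real L" by simp
      show "0 \<le> (\<Sum>e\<in>E n. D e)" unfolding D_def by (intro sum_nonneg) auto
    qed
    finally show ?thesis by (simp add: mult.commute)
  qed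
  have "(\<Sum>n=0..L. p n * (f n - f k)^2) \<le> (\<Sum>n=0..L. p n * (real L * (\<Sum>e\<in>E n. D e)))"
    using step assms(2) by (intro sum_mono mult_left_mono) auto
  also have "\<dots> = real L * (\<Sum>n=0..L. \<Sum>e<L. if e \<in> E n then p n * D e else 0)"
  proof -
    have "(\<Sum>e\<in>E n. D e) = (\<Sum>e<L. if e \<in> E n then D e else 0)" for n
    proof -
      have "E n = {e\<in>{..<L}. e \<in> E n}" using Esub[of n] by blast
      then have "sum D (E n) = sum D {e\<in>{..<L}. e \<in> E n}" by simp
      also have "\<dots> = (\<Sum>e<L. if e \<in> E n then D e else 0)" by (rule sum.inter_filter) simp
      finally show ?thesis .
    qed
    then show ?thesis by (simp add: sum_distrib_left algebra_simps if_distrib cong: if_cong)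
  qed
  also have "\<dots> = real L * (\<Sum>e<L. \<Sum>n=0..L. if e \<in> E n then p n * D e else 0)"
    by (simp add: sum.swap[of _ "{0..L}"])
  also have "\<dots> = real L * (\<Sum>e<L. (if e < k then (\<Sum>m<Suc e. p m) else (\<Sum>m=0..L. p m) - (\<Sum>m<Suc e. p m)) * D e)"
  proof -
    have fil: "(\<Sum>n=0..L. if n \<le> e then p n else 0) = (\<Sum>m<Suc e. p m)" if "e < L" for e
    proof -
      have "{n\<in>{0..L}. n \<le> e} = {..<Suc e}" using that by auto
      then show ?thesis by (simp add: sum.inter_filter[symmetric])
    qed
    have "(\<Sum>n=0..L. if e \<in> E n then p n * D e else 0) = (if e < k then (\<Sum>m<Suc e. p m) else (\<Sum>m=0..L. p m) - (\<Sum>m<Suc e. p m)) * D e" if e: "e < L" for e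
    proof (cases "e < k")
      case True
      then have "(\<Sum>n=0..L. if e \<in> E n then p n * D e else 0) = (\<Sum>n=0..L. if n \<le> e then p n else 0) * D e"
        unfolding E_def using e by (auto simp: sum_distrib_right intro!: sum.cong)
      then show ?thesis using fil[OF e] True by simp
    next
      case False
      then have "(\<Sum>n=0..L. if e \<in> E n then p n * D e else 0) = (\<Sum>n=0..L. p n - (if n \<le> e then p n else 0)) * D e"
        unfolding E_def using e by (auto simp: sum_distrib_right intro!: sum.cong)
      then show ?thesis using fil[OF e] False by (simp add: sum_subtractf)
    qed
    then show ?thesis by simp
  qed
  finally show ?thesis unfolding D_def .
qed


theorem lemma4p8:
  fixes L :: nat and p :: "nat \<Rightarrow> real" and q :: "nat \<Rightarrow> nat \<Rightarrow> real"
    and \<alpha> \<beta> :: real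
  assumes "L \<ge> 1"
    and "rate_matrix L q"
    and "prob_on L p"
    and "reversible L p q"
    and "\<alpha> > 0" and "\<beta> > 0"
    and "\<forall>n\<in>{1..L}. max (q n (n - 1)) (q (n - 1) n) \<ge> \<alpha>"
    and "\<forall>n\<in>{0..L}. min (\<Sum>m=0..n. p m) (\<Sum>m=n..L. p m) \<le> \<beta> * p n"
  shows "relaxation_time L p q \<le> \<beta> * real L / \<alpha>"
proof -
  note L1 = assms(1) and rate = assms(2) and rev = assms(4)
  note al = assms(5) and be = assms(6) and qa = assms(7) and cond = assms(8)
  have pos: "\<And>n. n \<le> L \<Longrightarrow> p n > 0" and sum1: "(\<Sum>n=0..L. p n) = 1"
    using assms(3) unfolding prob_on_def by auto
  have qnn: "\<And>n m. n \<le> L \<Longrightarrow> m \<le> L \<Longrightarrow> n \<noteq> m \<Longrightarrow> q n m \<ge> 0"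
    using rate unfolding rate_matrix_def by auto
  have revv: "\<And>n m. n \<le> L \<Longrightarrow> m \<le> L \<Longrightarrow> p n * q n m = p m * q m n"
    using rev unfolding reversible_def by auto
  define P where "P n = (\<Sum>m<n. p m)" for n
  have Pmono: "P a \<le> P b" if "a \<le> b" "b \<le> Suc L" for a b
    unfolding P_def using that pos by (intro sum_mono2) (auto simp: less_imp_le)
  have P0: "P 0 = 0" unfolding P_def by simp
  have PL: "P (Suc L) = 1" unfolding P_def using sum1 by (simp add: lessThan_Suc_atMost atLeast0AtMost)
  have Pst: "(\<Sum>m=0..n. p m) = P (Suc n)" for n
    unfolding P_def by (simp add: lessThan_Suc_atMost atLeast0AtMost)
  have Pend: "(\<Sum>m=n..L. p m) = 1 - P n" if "n \<le> L" for n
  proof -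
    have "{0..L} = {..<n} \<union> {n..L}" using that by auto
    then have "(\<Sum>m=0..L. p m) = P n + (\<Sum>m=n..L. p m)"
      unfolding P_def by (simp add: sum.union_disjoint ivl_disj_int)
    then show ?thesis using sum1 by simp
  qed
  have pP: "p n = P (Suc n) - P n" for n unfolding P_def by simp
  have cond': "min (P (Suc n)) (1 - P n) \<le> \<beta> * (P (Suc n) - P n)" if "n \<le> L" for n
    using cond that Pst Pend pP by auto
  define k where "k = (LEAST k. 1/2 \<le> P (Suc k))"
  have ex: "1/2 \<le> P (Suc L)" using PL by simp
  have k1: "1/2 \<le> P (Suc k)" unfolding k_def by (rule LeastI[of _ L]) (rule ex)
  have kL: "k \<le> L" unfolding k_def by (rule Least_le) (rule ex)
  have k2: "P k < 1/2"
  proof (cases k)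
    case 0 then show ?thesis using P0 by simp
  next
    case (Suc j)
    then have "j < k" by simp
    then have "\<not> 1/2 \<le> P (Suc j)" unfolding k_def by (rule not_less_Least)
    then show ?thesis using Suc by simp
  qed
  define T where "T e = (if e < k then P (Suc e) else 1 - P (Suc e))" for e
  have Tb: "T e \<le> \<beta> * p e \<and> T e \<le> \<beta> * p (Suc e)" if e: "e < L" for e
  proof (cases "e < k")
    case True
    have a1: "P (Suc e) \<le> P k" using True kL by (intro Pmono) auto
    have a2: "P e \<le> P k" using True kL by (intro Pmono) auto
    have c1: "min (P (Suc e)) (1 - P e) \<le> \<beta> * (P (Suc e) - P e)" using cond'[of e] e by simp
    have c2: "min (P (Suc (Suc e))) (1 - P (Suc e)) \<le> \<beta> * (P (Suc (Suc e)) - P (Suc e))" using cond'[of "Suc e"] e by simp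
    have "P (Suc e) \<le> P (Suc (Suc e))" using e by (intro Pmono) auto
    moreover have "Suc e < k \<Longrightarrow> P (Suc (Suc e)) \<le> P k" using kL by (intro Pmono) auto
    moreover have "Suc e = k \<or> Suc e < k" using True by auto
    ultimately show ?thesis using True a1 a2 c1 c2 k1 k2 pP[of e] pP[of "Suc e"]
      unfolding T_def min_def by (auto split: if_splits)
  next
    case False
    have a1: "P (Suc k) \<le> P (Suc e)" using False e by (intro Pmono) auto
    have a2: "P (Suc e) \<le> P (Suc (Suc e))" using e by (intro Pmono) auto
    have a3: "k < e \<Longrightarrow> P (Suc k) \<le> P e" using e by (intro Pmono) auto
    have a4: "P e \<le> P (Suc e)" using e by (intro Pmono) auto
    have c1: "min (P (Suc e)) (1 - P e) \<le> \<beta> * (P (Suc e) - P e)" using cond'[of e] e by simp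
    have c2: "min (P (Suc (Suc e))) (1 - P (Suc e)) \<le> \<beta> * (P (Suc (Suc e)) - P (Suc e))" using cond'[of "Suc e"] e by simp
    have "k = e \<or> k < e" using False by auto
    then show ?thesis using False a1 a2 a3 a4 c1 c2 k1 k2 pP[of e] pP[of "Suc e"]
      unfolding T_def min_def by (auto split: if_splits)
  qed
  define c where "c e = p (Suc e) * q (Suc e) e" for e
  have cb: "\<alpha> * T e \<le> \<beta> * c e" if e: "e < L" for e
  proof -
    have m: "max (q (Suc e) e) (q e (Suc e)) \<ge> \<alpha>" using qa e by force
    have r: "p e * q e (Suc e) = c e" unfolding c_def using revv[of e "Suc e"] e by simp
    show ?thesis
    proof (cases "q (Suc e) e \<ge> \<alpha>")
      case True
      have "\<alpha> * T e \<le> \<alpha> * (\<beta> * p (Suc e))" using Tb[OF e] al by simp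
      also have "\<dots> \<le> q (Suc e) e * (\<beta> * p (Suc e))"
        using True be pos[of "Suc e"] e by (intro mult_right_mono) auto
      finally show ?thesis unfolding c_def by (simp add: algebra_simps)
    next
      case False
      then have q2: "q e (Suc e) \<ge> \<alpha>" using m by (simp add: max_def split: if_splits)
      have "\<alpha> * T e \<le> \<alpha> * (\<beta> * p e)" using Tb[OF e] al by simp
      also have "\<dots> \<le> q e (Suc e) * (\<beta> * p e)"
        using q2 be pos[of e] e by (intro mult_right_mono) auto
      finally show ?thesis using r by (simp add: algebra_simps)
    qed
  qed
  have dir: "(\<Sum>e<L. c e * (f (Suc e) - f e)^2) \<le> dirichlet_form L p q f" for f
  proof -
    define g where "g n m = p n * q n m * (f n - f m)^2" for n m
    have gnn: "g n m \<ge> 0" if "n \<le> L" "m \<le> L" "n \<noteq> m" for n m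
      unfolding g_def using pos[of n] qnn[of n m] that by (intro mult_nonneg_nonneg) auto
    define h where "h n = (if 0 < n then g n (n - 1) else 0) + (if n < L then g n (Suc n) else 0)" for n
    have hb: "h n \<le> (\<Sum>m\<in>{0..L}-{n}. g n m)" if n: "n \<le> L" for n
    proof -
      have fin: "finite ({0..L}-{n})" by simp
      have nn: "\<And>m. m \<in> {0..L}-{n} \<Longrightarrow> g n m \<ge> 0" using gnn n by auto
      show ?thesis
      proof (cases "0 < n \<and> n < L")
        case True
        have "h n = (\<Sum>m\<in>{n-1, Suc n}. g n m)" unfolding h_def using True by simp
        also have "\<dots> \<le> (\<Sum>m\<in>{0..L}-{n}. g n m)"
          using True nn by (intro sum_mono2) auto
        finally show ?thesis .
      next
        case False
        then have "n = 0 \<or> n = L" using n by auto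
        then show ?thesis
        proof
          assume "n = 0"
          then have "h n = g n (Suc n)" unfolding h_def using L1 by simp
          also have "\<dots> \<le> (\<Sum>m\<in>{0..L}-{n}. g n m)"
            using \<open>n = 0\<close> L1 nn by (intro member_le_sum) auto
          finally show ?thesis .
        next
          assume "n = L"
          then have "h n = g n (n - 1)" unfolding h_def using L1 by simp
          also have "\<dots> \<le> (\<Sum>m\<in>{0..L}-{n}. g n m)"
            using \<open>n = L\<close> L1 nn by (intro member_le_sum) auto
          finally show ?thesis .
        qed
      qed
    qed
    obtain L' where L': "L = Suc L'" using L1 by (cases L) auto
    have s1: "(\<Sum>n=0..L. if 0 < n then g n (n - 1) else 0) = (\<Sum>e<L. g (Suc e) e)"
      unfolding L' by (subst sum.atLeast0_atMost_Suc_shift) (simp add: lessThan_Suc_atMost atLeast0AtMost)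
    have s2: "(\<Sum>n=0..L. if n < L then g n (Suc n) else 0) = (\<Sum>e<L. g e (Suc e))"
      unfolding L' by (simp add: sum.atLeast0_atMost_Suc lessThan_Suc_atMost atLeast0AtMost)
    have ge1: "g (Suc e) e = c e * (f (Suc e) - f e)^2" for e unfolding g_def c_def by simp
    have ge2: "g e (Suc e) = c e * (f (Suc e) - f e)^2" if "e < L" for e
      unfolding g_def c_def using revv[of e "Suc e"] that by (simp add: power2_commute)
    have "2 * (\<Sum>e<L. c e * (f (Suc e) - f e)^2) = (\<Sum>n=0..L. h n)"
      unfolding h_def sum.distrib s1 s2 using ge2 by (simp add: ge1)
    also have "\<dots> \<le> (\<Sum>n=0..L. \<Sum>m\<in>{0..L}-{n}. g n m)"
      using hb by (intro sum_mono) auto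
    finally show ?thesis unfolding dirichlet_form_def g_def by simp
  qed
  define a where "a = \<alpha> / (\<beta> * real L)"
  have apos: "a > 0" unfolding a_def using al be L1 by simp
  have main: "a \<le> dirichlet_form L p q f / variance_p L p f" if v: "variance_p L p f \<noteq> 0" for f
  proof -
    have vpos: "variance_p L p f > 0" using var_nonneg[OF sum1, of f] pos v by auto
    have "variance_p L p f \<le> (\<Sum>n=0..L. p n * (f n - f k)^2)" by (rule var_le[OF sum1])
    also have "\<dots> \<le> real L * (\<Sum>e<L. T e * (f (Suc e) - f e)^2)"
      using path_bound[of k L p f] kL pos unfolding T_def P_def sum1
      by (auto simp: less_imp_le)
    also have "\<dots> \<le> real L * (\<Sum>e<L. (\<beta> / \<alpha>) * c e * (f (Suc e) - f e)^2)"
    proof (intro mult_left_mono sum_mono)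
      fix e assume "e \<in> {..<L}"
      then have "T e \<le> (\<beta> / \<alpha>) * c e" using cb[of e] al by (simp add: field_simps)
      then show "T e * (f (Suc e) - f e)^2 \<le> (\<beta> / \<alpha>) * c e * (f (Suc e) - f e)^2"
        by (intro mult_right_mono) auto
    qed simp
    also have "\<dots> = real L * (\<beta> / \<alpha>) * (\<Sum>e<L. c e * (f (Suc e) - f e)^2)"
      by (simp add: sum_distrib_left mult.assoc)
    also have "\<dots> \<le> real L * (\<beta> / \<alpha>) * dirichlet_form L p q f"
      using dir[of f] al be by (intro mult_left_mono) auto
    finally have "variance_p L p f \<le> real L * (\<beta> / \<alpha>) * dirichlet_form L p q f" .
    then show ?thesis unfolding a_def using vpos al be L1
      by (simp add: field_simps)
  qed
  define f0 :: "nat \<Rightarrow> real" where "f0 n = (if n = 0 then 1 else 0)" for n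
  have v0: "variance_p L p f0 = p 0 - (p 0)^2"
  proof -
    have sq: "\<And>n. (f0 n)^2 = f0 n" unfolding f0_def by simp
    have s: "(\<Sum>n=0..L. p n * f0 n) = p 0" unfolding f0_def
      by (simp add: if_distrib cong: if_cong)
    then have "(\<Sum>n=0..L. p n * (f0 n)^2) = p 0" by (simp add: sq)
    moreover note s
    ultimately show ?thesis unfolding variance_p_def by simp
  qed
  have "P 2 \<le> P (Suc L)" using L1 by (intro Pmono) auto
  then have "p 0 + p 1 \<le> 1" using PL unfolding P_def by (simp add: numeral_2_eq_2)
  then have "p 0 < 1" using pos[of 1] L1 by simp
  then have "variance_p L p f0 \<noteq> 0" using v0 pos[of 0] by (simp add: power2_eq_square)
  then have ne: "{dirichlet_form L p q f / variance_p L p f | f. variance_p L p f \<noteq> 0} \<noteq> {}" by blast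
  have gap: "a \<le> spectral_gap L p q"
    unfolding spectral_gap_def by (rule cInf_greatest[OF ne]) (use main in blast)
  have "relaxation_time L p q \<le> 1 / a"
    unfolding relaxation_time_def using gap apos by (intro divide_left_mono) auto
  also have "1 / a = \<beta> * real L / \<alpha>" unfolding a_def by simp
  finally show ?thesis .
qed

end
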